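(* In the setting described in the context, for every $\chi\in \mathrm{X}(l)$ one has $s_{uu}^*(\chi)=-\sigma(\chi)$, where $\sigma$ denotes the natural Galois action on $\mathrm{X}(l)=H^1(G_l,\mathbb{Q}/\mathbb{Z})$.
   Context: Let $k$ be a perfect field with algebraic closure $\bar k$; for $k\subseteq K\subseteq \bar k$ put $G_K=\operatorname{Gal}(\bar k/K)$. Let $c,d\in k^*$ with the quaternion algebra $(c,d)_k$ not split; let $E=\operatorname{Frac}(k[x,y]/\langle 1-cx^2-dy^2\rangle)$, $l=k(\sqrt d)$, $u=(1+\sqrt d\,y)/x\in El$, so $El=l(u)$. Let $\bar k(u)$ be the rational function field over $\bar k$, on which $G_l$ acts through the coefficients. Fix $\sigma\in G_k$ restricting to the nontrivial automorphism of $l$, and let $s$ be the automorphism of $\bar k(u)$ with $s(a)=\sigma(a)$ for $a\in\bar k$ and $s(u)=c/u$. Identify $\operatorname{Br}(l(u))=H^2(G_l,\bar k(u)^* )$, and let $s^*$ act on it by $(s^*h)(g_1,g_2)=s\big(h(\sigma^{-1}g_1\sigma,\sigma^{-1}g_2\sigma)\big)$ on $2$-cocycles. For $K\supseteq l$ put $\mathrm{X}(K)=H^1(G_K,\mathbb{Q}/\mathbb{Z})$ (trivial action); $\sigma$ acts on $\mathrm{X}(l)$ by $(\sigma\chi)(g)=\chi(\sigma^{-1}g\sigma)$ and on $\operatorname{Br}(l)=H^2(G_l,\bar k^* )$ by $(\sigma h)(g_1,g_2)=\sigma(h(\sigma^{-1}g_1\sigma,\sigma^{-1}g_2\sigma))$.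 Let $p$ range over monic irreducible polynomials in $l[u]$ other than $u$; fix a root $a_p\in\bar k$ of each, and let $\tilde p$ be the monic irreducible polynomial in $l[u]$ whose roots are $c/\sigma(a)$, $a$ running over the roots of $p$. Let $B(p)\subset\bar k(u)^*$ be the subgroup generated by the $u-a$, $p(a)=0$. As $G_l$-modules $\bar k(u)^*=\bar k^*\times\langle u\rangle\times\coprod_p B(p)$, giving $H^2(G_l,\bar k(u)^* )=H^2(G_l,\bar k^* )\oplus H^2(G_l,\langle u\rangle)\oplus\bigoplus_p H^2(G_l,B(p))$. Identify $H^2(G_l,\bar k^* )=\operatorname{Br}(l)$; identify $\mathrm{X}(l)$ with $H^2(G_l,\langle u\rangle)$ via $\pi^*\circ\delta$, where $\delta\colon H^1(G_l,\mathbb{Q}/\mathbb{Z})\to H^2(G_l,\mathbb{Z})$ is the connecting map of $0\to\mathbb{Z}\to\mathbb{Q}\to\mathbb{Q}/\mathbb{Z}\to0$ and $\pi(e)=u^e$; identify $\mathrm{X}(l(a_p))$ with $H^2(G_l,B(p))$ via $\iota^*\circ sh\circ\delta$, where $H=G_{l(a_p)}$, $\delta\colon H^1(H,\mathbb{Q}/\mathbb{Z})\to H^2(H,\mathbb{Z})$, $sh\colon H^2(H,\mathbb{Z})\to H^2(G_l,A)$ is the Shapiro isomorphism with $A=\{x\colon G_l\to\mathbb{Z} : x(hg)=x(g)\ \forall h\in H\}$, $(gx)(g_1)=x(g_1g)$, and $\iota\colon A\to B(p)$, $\iota(x)=\prod_{\tau H\in G_l/H}(u-\tau(a_p))^{x(\tau^{-1})}$.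 This gives $\operatorname{Br}(l(u))\cong\operatorname{Br}(l)\oplus\mathrm{X}(l)\oplus\bigoplus_p\mathrm{X}(l(a_p))$. In it $s^*$ is triangular: $s^*$ maps $\operatorname{Br}(l)$ to itself, $\mathrm{X}(l)$ into $\operatorname{Br}(l)\oplus\mathrm{X}(l)$, and $\mathrm{X}(l(a_p))$ into $\operatorname{Br}(l)\oplus\mathrm{X}(l)\oplus\mathrm{X}(l(a_{\tilde p}))$. Write $s_{uu}^*\colon\mathrm{X}(l)\to\mathrm{X}(l)$ for the $\mathrm{X}(l)$-component of $s^*$ restricted to $\mathrm{X}(l)$ (concretely, the map on $H^2(G_l,\langle u\rangle)$ given by $f\mapsto s_{uu}(f(\sigma^{-1}g_1\sigma,\sigma^{-1}g_2\sigma))$ with $s_{uu}(u^e)=u^{-e}$). *)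

theory Defs
  imports "HOL-Algebra.Algebraic_Closure" "HOL-Algebra.Generated_Fields" Complex_Main
begin

text \<open>Perfect subfield k of the ambient field K: char 0, or char p and x \<mapsto> x^p surjective on k.\<close>
definition perfect_subfield :: "('a, 'b) ring_scheme \<Rightarrow> 'a set \<Rightarrow> bool" where
  "perfect_subfield K k \<longleftrightarrow>
     ((\<exists>n::nat. 0 < n \<and> add_pow K n \<one>\<^bsub>K\<^esub> = \<zero>\<^bsub>K\<^esub>) \<longrightarrow>
        (let p = (LEAST n::nat. 0 < n \<and> add_pow K n \<one>\<^bsub>K\<^esub> = \<zero>\<^bsub>K\<^esub>)
         in \<forall>x\<in>k. \<exists>y\<in>k. y [^]\<^bsub>K\<^esub> p = x))"

text \<open>Quaternion algebra (c,d)_k with basis 1,i,j,ij, i^2=c, j^2=d, ij=-ji; elements are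
  4-tuples of coefficients in k.  It is split iff it is not a division algebra,
  i.e. iff it has zero divisors.\<close>
definition quat_mul :: "('a, 'b) ring_scheme \<Rightarrow> 'a \<Rightarrow> 'a \<Rightarrow> 'a \<times> 'a \<times> 'a \<times> 'a
   \<Rightarrow> 'a \<times> 'a \<times> 'a \<times> 'a \<Rightarrow> 'a \<times> 'a \<times> 'a \<times> 'a" where
  "quat_mul K c d = (\<lambda>(a0,a1,a2,a3) (b0,b1,b2,b3).
     (a0 \<otimes>\<^bsub>K\<^esub> b0 \<oplus>\<^bsub>K\<^esub> c \<otimes>\<^bsub>K\<^esub> a1 \<otimes>\<^bsub>K\<^esub> b1 \<oplus>\<^bsub>K\<^esub> d \<otimes>\<^bsub>K\<^esub> a2 \<otimes>\<^bsub>K\<^esub> b2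
        \<ominus>\<^bsub>K\<^esub> c \<otimes>\<^bsub>K\<^esub> d \<otimes>\<^bsub>K\<^esub> a3 \<otimes>\<^bsub>K\<^esub> b3,
      a0 \<otimes>\<^bsub>K\<^esub> b1 \<oplus>\<^bsub>K\<^esub> a1 \<otimes>\<^bsub>K\<^esub> b0 \<ominus>\<^bsub>K\<^esub> d \<otimes>\<^bsub>K\<^esub> a2 \<otimes>\<^bsub>K\<^esub> b3
        \<oplus>\<^bsub>K\<^esub> d \<otimes>\<^bsub>K\<^esub> a3 \<otimes>\<^bsub>K\<^esub> b2,
      a0 \<otimes>\<^bsub>K\<^esub> b2 \<oplus>\<^bsub>K\<^esub> a2 \<otimes>\<^bsub>K\<^esub> b0 \<oplus>\<^bsub>K\<^esub> c \<otimes>\<^bsub>K\<^esub> a1 \<otimes>\<^bsub>K\<^esub> b3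
        \<ominus>\<^bsub>K\<^esub> c \<otimes>\<^bsub>K\<^esub> a3 \<otimes>\<^bsub>K\<^esub> b1,
      a0 \<otimes>\<^bsub>K\<^esub> b3 \<oplus>\<^bsub>K\<^esub> a3 \<otimes>\<^bsub>K\<^esub> b0 \<oplus>\<^bsub>K\<^esub> a1 \<otimes>\<^bsub>K\<^esub> b2
        \<ominus>\<^bsub>K\<^esub> a2 \<otimes>\<^bsub>K\<^esub> b1))"

definition quat_split :: "('a, 'b) ring_scheme \<Rightarrow> 'a set \<Rightarrow> 'a \<Rightarrow> 'a \<Rightarrow> bool" where
  "quat_split K k c d \<longleftrightarrow>
     (\<exists>x\<in>k \<times> k \<times> k \<times> k. \<exists>y\<in>k \<times> k \<times> k \<times> k.
        x \<noteq> (\<zero>\<^bsub>K\<^esub>, \<zero>\<^bsub>K\<^esub>, \<zero>\<^bsub>K\<^esub>, \<zero>\<^bsub>K\<^esub>) \<and> y \<noteq> (\<zero>\<^bsub>K\<^esub>, \<zero>\<^bsub>K\<^esub>, \<zero>\<^bsub>K\<^esub>, \<zero>\<^bsub>K\<^esub>) \<and>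
        quat_mul K c d x y = (\<zero>\<^bsub>K\<^esub>, \<zero>\<^bsub>K\<^esub>, \<zero>\<^bsub>K\<^esub>, \<zero>\<^bsub>K\<^esub>))"

text \<open>G_F = Gal(K/F): automorphisms of K (K = algebraic closure) fixing F pointwise,
  normalised to be extensional on the carrier.\<close>
definition Gal :: "('a, 'b) ring_scheme \<Rightarrow> 'a set \<Rightarrow> ('a \<Rightarrow> 'a) set" where
  "Gal K F = {g. g \<in> ring_iso K K \<and> g \<in> extensional (carrier K) \<and> (\<forall>x\<in>F. g x = x)}"

definition gmul :: "('a, 'b) ring_scheme \<Rightarrow> ('a \<Rightarrow> 'a) \<Rightarrow> ('a \<Rightarrow> 'a) \<Rightarrow> ('a \<Rightarrow> 'a)" where
  "gmul K g h = compose (carrier K) g h"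

definition ginv :: "('a, 'b) ring_scheme \<Rightarrow> ('a \<Rightarrow> 'a) \<Rightarrow> ('a \<Rightarrow> 'a)" where
  "ginv K g = restrict (inv_into (carrier K) g) (carrier K)"

definition conj :: "('a, 'b) ring_scheme \<Rightarrow> ('a \<Rightarrow> 'a) \<Rightarrow> ('a \<Rightarrow> 'a) \<Rightarrow> ('a \<Rightarrow> 'a)" where
  "conj K \<sigma> g = gmul K (ginv K \<sigma>) (gmul K g \<sigma>)"

text \<open>A function on G (resp. G\<times>G) with discrete values is continuous for the Krull
  topology iff it is locally constant, i.e. depends only on the restriction of the
  arguments to some finite set of elements of K.\<close>
definition cont1 :: "('a, 'b) ring_scheme \<Rightarrow> ('a \<Rightarrow> 'a) set \<Rightarrow> (('a \<Rightarrow> 'a) \<Rightarrow> 'c) \<Rightarrow> bool" where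
  "cont1 K G f \<longleftrightarrow> (\<exists>S. finite S \<and> S \<subseteq> carrier K \<and>
      (\<forall>g\<in>G. \<forall>g'\<in>G. (\<forall>x\<in>S. g x = g' x) \<longrightarrow> f g = f g'))"

definition cont2 :: "('a, 'b) ring_scheme \<Rightarrow> ('a \<Rightarrow> 'a) set
    \<Rightarrow> (('a \<Rightarrow> 'a) \<Rightarrow> ('a \<Rightarrow> 'a) \<Rightarrow> 'c) \<Rightarrow> bool" where
  "cont2 K G f \<longleftrightarrow> (\<exists>S. finite S \<and> S \<subseteq> carrier K \<and>
      (\<forall>g1\<in>G. \<forall>g2\<in>G. \<forall>h1\<in>G. \<forall>h2\<in>G.
         (\<forall>x\<in>S. g1 x = h1 x \<and> g2 x = h2 x) \<longrightarrow> f g1 g2 = f h1 h2))"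

text \<open>Elements of Q/Z are represented by their unique representative in [0,1).
  A character is a continuous homomorphism G \<rightarrow> Q/Z.\<close>
definition character :: "('a, 'b) ring_scheme \<Rightarrow> ('a \<Rightarrow> 'a) set \<Rightarrow> (('a \<Rightarrow> 'a) \<Rightarrow> rat) \<Rightarrow> bool" where
  "character K G \<chi> \<longleftrightarrow> (\<forall>g\<in>G. 0 \<le> \<chi> g \<and> \<chi> g < 1) \<and>
     (\<forall>g\<in>G. \<forall>h\<in>G. \<chi> (gmul K g h) = frac (\<chi> g + \<chi> h)) \<and> cont1 K G \<chi>"

definition char_act :: "('a, 'b) ring_scheme \<Rightarrow> ('a \<Rightarrow> 'a) \<Rightarrow> (('a \<Rightarrow> 'a) \<Rightarrow> rat) \<Rightarrow> (('a \<Rightarrow> 'a) \<Rightarrow> rat)" where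
  "char_act K \<sigma> \<chi> = (\<lambda>g. \<chi> (conj K \<sigma> g))"

definition char_neg :: "(('a \<Rightarrow> 'a) \<Rightarrow> rat) \<Rightarrow> (('a \<Rightarrow> 'a) \<Rightarrow> rat)" where
  "char_neg \<chi> = (\<lambda>g. frac (- \<chi> g))"

text \<open>\<delta>: H^1(G,Q/Z) \<rightarrow> H^2(G,Z): coboundary of the lift of \<chi> to Q with values in [0,1)
  (trivial action); the value is an integer.  Composed with \<pi>(e) = u^e, a 2-cocycle with
  values in \<langle>u\<rangle> is recorded by its exponents.\<close>
definition delta :: "('a, 'b) ring_scheme \<Rightarrow> (('a \<Rightarrow> 'a) \<Rightarrow> rat) \<Rightarrow> ('a \<Rightarrow> 'a) \<Rightarrow> ('a \<Rightarrow> 'a) \<Rightarrow> int" where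
  "delta K \<chi> g1 g2 = \<lfloor>\<chi> g2 - \<chi> (gmul K g1 g2) + \<chi> g1\<rfloor>"

definition cohomologous2 :: "('a, 'b) ring_scheme \<Rightarrow> ('a \<Rightarrow> 'a) set
   \<Rightarrow> (('a \<Rightarrow> 'a) \<Rightarrow> ('a \<Rightarrow> 'a) \<Rightarrow> int) \<Rightarrow> (('a \<Rightarrow> 'a) \<Rightarrow> ('a \<Rightarrow> 'a) \<Rightarrow> int) \<Rightarrow> bool" where
  "cohomologous2 K G f f' \<longleftrightarrow> (\<exists>b :: ('a \<Rightarrow> 'a) \<Rightarrow> int. cont1 K G b \<and>
     (\<forall>g1\<in>G. \<forall>g2\<in>G. f g1 g2 - f' g1 g2 = b g2 - b (gmul K g1 g2) + b g1))"

text \<open>s_uu^*: f \<mapsto> s_uu(f(\<sigma>^{-1}g1\<sigma>, \<sigma>^{-1}g2\<sigma>)) with s_uu(u^e) = u^{-e}; on exponents,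
  negation.\<close>
definition s_uu_star :: "('a, 'b) ring_scheme \<Rightarrow> ('a \<Rightarrow> 'a)
   \<Rightarrow> (('a \<Rightarrow> 'a) \<Rightarrow> ('a \<Rightarrow> 'a) \<Rightarrow> int) \<Rightarrow> (('a \<Rightarrow> 'a) \<Rightarrow> ('a \<Rightarrow> 'a) \<Rightarrow> int)" where
  "s_uu_star K \<sigma> f = (\<lambda>g1 g2. - f (conj K \<sigma> g1) (conj K \<sigma> g2))"

end

theory Submission
  imports Defs
begin

lemma rat_id:
  fixes a b :: rat
  shows "- \<lfloor>b - frac (a + b) + a\<rfloor> -
     \<lfloor>frac (- b) - frac (- frac (a + b)) + frac (- a)\<rfloor>
   = \<lfloor>- b\<rfloor> - \<lfloor>- frac (a + b)\<rfloor> + \<lfloor>- a\<rfloor>"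
proof -
  have e1: "b - frac (a + b) + a = of_int \<lfloor>a+b\<rfloor>" by (simp add: frac_def)
  have e2: "frac (- b) - frac (- frac (a + b)) + frac (- a) =
     of_int (- \<lfloor>a+b\<rfloor> - \<lfloor>-b\<rfloor> + \<lfloor>- frac (a + b)\<rfloor> - \<lfloor>-a\<rfloor>)"
    by (simp add: frac_def)
  show ?thesis unfolding e1 e2 floor_of_int by simp
qed

lemma fix_gen:
  assumes F: "field K" and phi: "\<phi> \<in> ring_hom K K" and H: "H \<subseteq> carrier K"
    and fx: "\<forall>x\<in>H. \<phi> x = x" and x: "x \<in> generate_field K H"
  shows "\<phi> x = x"
  using x
proof (induction rule: generate_field.induct)
  case one
  then show ?case using phi by (simp add: ring_hom_one)
next
  case (incl h)
  then show ?case using fx by blast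
next
  case (a_inv h)
  have hC: "h \<in> carrier K" using field.generate_field_in_carrier[OF F H a_inv(1)] .
  interpret ring_hom_cring K K \<phi>
    using F phi by (simp add: ring_hom_cringI field.axioms(1) domain.axioms(1))
  show ?case using hC a_inv(2) by simp
next
  case (m_inv h)
  have hC: "h \<in> carrier K" using field.generate_field_in_carrier[OF F H m_inv(1)] .
  interpret field K by fact
  have iu: "inv\<^bsub>K\<^esub> h \<in> carrier K" "inv\<^bsub>K\<^esub> h \<otimes>\<^bsub>K\<^esub> h = \<one>\<^bsub>K\<^esub>" using hC m_inv(2) field_Units by auto
  have "\<phi> (inv\<^bsub>K\<^esub> h) \<otimes>\<^bsub>K\<^esub> h = \<one>\<^bsub>K\<^esub>"
    using ring_hom_mult[OF phi iu(1) hC] iu(2) m_inv(3) ring_hom_one[OF phi] by simp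
  moreover have "\<phi> (inv\<^bsub>K\<^esub> h) \<in> carrier K" using ring_hom_closed[OF phi iu(1)] .
  ultimately show ?case using hC
    by (metis comm_inv_char m_comm)
next
  case (eng_add h1 h2)
  have "h1 \<in> carrier K" "h2 \<in> carrier K"
    using field.generate_field_in_carrier[OF F H] eng_add(1,2) by auto
  then show ?case using eng_add ring_hom_add[OF phi] by simp
next
  case (eng_mult h1 h2)
  have "h1 \<in> carrier K" "h2 \<in> carrier K"
    using field.generate_field_in_carrier[OF F H] eng_mult(1,2) by auto
  then show ?case using eng_mult ring_hom_mult[OF phi] by simp
qed

theorem proposition2:
  fixes K :: "'a ring" and k :: "'a set" and c d r :: 'a and \<sigma> :: "'a \<Rightarrow> 'a"
    and \<chi> :: "('a \<Rightarrow> 'a) \<Rightarrow> rat"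
  assumes "algebraic_closure K k"
    and "algebraically_closed K"
    and "perfect_subfield K k"
    and "c \<in> k" "c \<noteq> \<zero>\<^bsub>K\<^esub>" "d \<in> k" "d \<noteq> \<zero>\<^bsub>K\<^esub>"
    and "\<not> quat_split K k c d"
    and "r \<in> carrier K" "r \<otimes>\<^bsub>K\<^esub> r = d"
    and "\<sigma> \<in> Gal K k" "\<sigma> r \<noteq> r"
    and "character K (Gal K (generate_field K (insert r k))) \<chi>"
  shows "cohomologous2 K (Gal K (generate_field K (insert r k)))
           (s_uu_star K \<sigma> (delta K \<chi>))
           (delta K (char_neg (char_act K \<sigma> \<chi>)))"
proof -
  let ?C = "carrier K"
  define L where "L = generate_field K (insert r k)"
  define G where "G = Gal K L"
  interpret ac: algebraic_closure K k by (rule assms(1))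
  have F: "field K" by (rule ac.field_axioms)
  have R: "ring K" by (rule ac.ring_axioms)
  have kC: "k \<subseteq> ?C" using subringE(1)[OF subfieldE(1)[OF ac.subfield_axioms]] .
  have HC: "insert r k \<subseteq> ?C" using kC assms(9) by auto
  have sig: "\<sigma> \<in> ring_iso K K" "\<forall>x\<in>k. \<sigma> x = x" using assms(11) unfolding Gal_def by auto
  have sbij: "bij_betw \<sigma> ?C ?C" using ring_iso_memE(5)[OF sig(1)] .
  hence sinj: "inj_on \<sigma> ?C" and ssurj: "\<sigma> ` ?C = ?C" by (auto simp: bij_betw_def)
  have shom: "\<sigma> \<in> ring_hom K K" using sig(1) by (simp add: ring_iso_def)
  have srC: "\<sigma> r \<in> ?C" using ring_hom_closed[OF shom assms(9)] .
  have sq: "\<sigma> r \<otimes>\<^bsub>K\<^esub> \<sigma> r = r \<otimes>\<^bsub>K\<^esub> r"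
    using ring_hom_mult[OF shom assms(9) assms(9)] assms(10) sig(2) assms(6) by simp
  have aux: "x \<oplus>\<^bsub>K\<^esub> (y \<oplus>\<^bsub>K\<^esub> (z \<oplus>\<^bsub>K\<^esub> \<ominus>\<^bsub>K\<^esub> x)) = y \<oplus>\<^bsub>K\<^esub> z"
    if "x \<in> ?C" "y \<in> ?C" "z \<in> ?C" for x y z
  proof -
    have "z \<oplus>\<^bsub>K\<^esub> \<ominus>\<^bsub>K\<^esub> x = \<ominus>\<^bsub>K\<^esub> x \<oplus>\<^bsub>K\<^esub> z"
      using that by (simp add: ac.a_comm)
    moreover have "y \<oplus>\<^bsub>K\<^esub> (\<ominus>\<^bsub>K\<^esub> x \<oplus>\<^bsub>K\<^esub> z) = \<ominus>\<^bsub>K\<^esub> x \<oplus>\<^bsub>K\<^esub> (y \<oplus>\<^bsub>K\<^esub> z)"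
      using that by (simp add: ac.a_lcomm)
    moreover have "x \<oplus>\<^bsub>K\<^esub> (\<ominus>\<^bsub>K\<^esub> x \<oplus>\<^bsub>K\<^esub> (y \<oplus>\<^bsub>K\<^esub> z)) = y \<oplus>\<^bsub>K\<^esub> z"
      using that by (simp add: ac.r_neg2)
    ultimately show ?thesis by simp
  qed
  have rneg: "\<sigma> r = \<ominus>\<^bsub>K\<^esub> r"
  proof -
    have rC: "r \<in> ?C" by (rule assms(9))
    have e1: "(\<sigma> r \<ominus>\<^bsub>K\<^esub> r) \<otimes>\<^bsub>K\<^esub> (\<sigma> r \<oplus>\<^bsub>K\<^esub> r)
          = \<sigma> r \<otimes>\<^bsub>K\<^esub> \<sigma> r \<ominus>\<^bsub>K\<^esub> r \<otimes>\<^bsub>K\<^esub> r"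
      using srC rC
      apply (simp add: ac.r_distr ac.l_distr ac.minus_eq ac.a_ac ac.l_minus ac.r_minus ac.m_comm[of r "\<sigma> r"])
      apply (rule aux)
      apply (simp_all)
      done
    have e2: "(\<sigma> r \<ominus>\<^bsub>K\<^esub> r) \<otimes>\<^bsub>K\<^esub> (\<sigma> r \<oplus>\<^bsub>K\<^esub> r) = \<zero>\<^bsub>K\<^esub>"
      unfolding e1 sq using rC by (simp add: ac.minus_eq ac.r_neg)
    have "\<sigma> r \<ominus>\<^bsub>K\<^esub> r = \<zero>\<^bsub>K\<^esub> \<or> \<sigma> r \<oplus>\<^bsub>K\<^esub> r = \<zero>\<^bsub>K\<^esub>"
      by (rule ac.integral[OF e2]) (simp_all add: srC rC ac.minus_closed)
    then show ?thesis
    proof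
      assume "\<sigma> r \<ominus>\<^bsub>K\<^esub> r = \<zero>\<^bsub>K\<^esub>"
      then have "\<sigma> r = \<ominus>\<^bsub>K\<^esub> (\<ominus>\<^bsub>K\<^esub> r)"
        using ac.sum_zero_eq_neg[of "\<sigma> r" "\<ominus>\<^bsub>K\<^esub> r"] srC rC by (simp add: ac.minus_eq)
      then have "\<sigma> r = r" using rC by simp
      then show ?thesis using assms(12) by simp
    next
      assume "\<sigma> r \<oplus>\<^bsub>K\<^esub> r = \<zero>\<^bsub>K\<^esub>"
      then show ?thesis using ac.sum_zero_eq_neg srC rC by blast
    qed
  qed
  have cj: "conj K \<sigma> g x = inv_into ?C \<sigma> (g (\<sigma> x))"
    if x: "x \<in> ?C" and gC: "\<forall>y\<in>?C. g y \<in> ?C" for g x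
  proof -
    have "\<sigma> x \<in> ?C" using x ssurj by auto
    then show ?thesis using x gC unfolding conj_def gmul_def ginv_def compose_def by simp
  qed
  have GE: "g \<in> ring_iso K K" "\<forall>x\<in>L. g x = x" "\<forall>y\<in>?C. g y \<in> ?C" "g \<in> extensional ?C"
    if "g \<in> G" for g
    using that ring_iso_memE(1)[of g K K] unfolding G_def Gal_def by auto
  have conjG: "conj K \<sigma> g \<in> G" if g: "g \<in> G" for g
  proof -
    note gi = GE[OF g]
    have inviso: "inv_into ?C \<sigma> \<in> ring_iso K K" using ring_iso_set_sym[OF R sig(1)] .
    have comp: "(inv_into ?C \<sigma>) \<circ> (g \<circ> \<sigma>) \<in> ring_iso K K"
      using ring_iso_set_trans[OF ring_iso_set_trans[OF sig(1) gi(1)] inviso] by (simp add: comp_assoc)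
    have iso: "conj K \<sigma> g \<in> ring_iso K K"
      by (rule ring.ring_iso_restrict[OF R comp]) (simp add: cj[OF _ gi(3)])
    have ext: "conj K \<sigma> g \<in> extensional ?C" unfolding conj_def gmul_def by simp
    have ghom: "g \<in> ring_hom K K" using gi(1) by (simp add: ring_iso_def)
    have rL: "r \<in> L" unfolding L_def by (simp add: generate_field.incl)
    have kL: "k \<subseteq> L" unfolding L_def by (auto intro: generate_field.incl)
    have fixH: "\<forall>x\<in>insert r k. conj K \<sigma> g x = x"
    proof
      fix x assume x: "x \<in> insert r k"
      show "conj K \<sigma> g x = x"
      proof (cases "x = r")
        case True
        interpret gh: ring_hom_cring K K g
          using F ghom by (simp add: ring_hom_cringI field.axioms(1) domain.axioms(1))
        have "g (\<sigma> r) = \<ominus>\<^bsub>K\<^esub> r" using rneg gh.hom_a_inv[OF assms(9)] gi(2) rL by simp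
        also have "\<dots> = \<sigma> r" using rneg by simp
        finally show ?thesis using True cj[OF assms(9) gi(3)] inv_into_f_f[OF sinj assms(9)] by simp
      next
        case False
        then have xk: "x \<in> k" using x by auto
        then have "g (\<sigma> x) = \<sigma> x" using sig(2) gi(2) kL by auto
        then show ?thesis using cj[OF _ gi(3)] xk kC inv_into_f_f[OF sinj] by auto
      qed
    qed
    have "\<forall>x\<in>L. conj K \<sigma> g x = x"
      using fix_gen[OF F _ HC fixH] iso unfolding L_def by (simp add: ring_iso_def)
    then show ?thesis unfolding G_def Gal_def using iso ext by auto
  qed
  have conj_mul: "conj K \<sigma> (gmul K g1 g2) = gmul K (conj K \<sigma> g1) (conj K \<sigma> g2)"
    if g1: "g1 \<in> G" and g2: "g2 \<in> G" for g1 g2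
  proof (rule extensionalityI[of _ ?C])
    show "conj K \<sigma> (gmul K g1 g2) \<in> extensional ?C" unfolding conj_def gmul_def by simp
    show "gmul K (conj K \<sigma> g1) (conj K \<sigma> g2) \<in> extensional ?C" unfolding gmul_def by simp
    fix x assume x: "x \<in> ?C"
    have m: "\<forall>y\<in>?C. gmul K g1 g2 y \<in> ?C" using GE(3)[OF g1] GE(3)[OF g2]
      unfolding gmul_def compose_def by simp
    have sx: "\<sigma> x \<in> ?C" using x ssurj by auto
    have c2: "conj K \<sigma> g2 x \<in> ?C" using GE(3)[OF conjG[OF g2]] x by simp
    have "conj K \<sigma> (gmul K g1 g2) x = inv_into ?C \<sigma> (g1 (g2 (\<sigma> x)))"
      using cj[OF x m] sx unfolding gmul_def compose_def by (simp add: restrict_def)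
    also have "\<dots> = inv_into ?C \<sigma> (g1 (\<sigma> (conj K \<sigma> g2 x)))"
      using cj[OF x GE(3)[OF g2]] f_inv_into_f[of _ \<sigma> ?C] ssurj GE(3)[OF g2] sx by simp
    also have "\<dots> = gmul K (conj K \<sigma> g1) (conj K \<sigma> g2) x"
      using cj[OF c2 GE(3)[OF g1]] x unfolding gmul_def compose_def by simp
    finally show "conj K \<sigma> (gmul K g1 g2) x = gmul K (conj K \<sigma> g1) (conj K \<sigma> g2) x" .
  qed
  have ch: "\<forall>g\<in>G. \<forall>h\<in>G. \<chi> (gmul K g h) = frac (\<chi> g + \<chi> h)" "cont1 K G \<chi>"
    using assms(13) unfolding character_def G_def L_def by auto
  obtain S where S: "finite S" "S \<subseteq> ?C"
    "\<forall>g\<in>G. \<forall>g'\<in>G. (\<forall>x\<in>S. g x = g' x) \<longrightarrow> \<chi> g = \<chi> g'"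
    using ch(2) unfolding cont1_def by blast
  have bcont: "cont1 K G (\<lambda>g. \<lfloor>- \<chi> (conj K \<sigma> g)\<rfloor>)"
    unfolding cont1_def
  proof (intro exI[of _ "\<sigma> ` S"] conjI ballI impI)
    show "finite (\<sigma> ` S)" using S(1) by simp
    show "\<sigma> ` S \<subseteq> ?C" using S(2) ssurj by auto
    fix g g' assume g: "g \<in> G" and g': "g' \<in> G" and eq: "\<forall>x\<in>\<sigma> ` S. g x = g' x"
    have "\<forall>x\<in>S. conj K \<sigma> g x = conj K \<sigma> g' x"
      using cj[OF _ GE(3)[OF g]] cj[OF _ GE(3)[OF g']] eq S(2) by auto
    then have "\<chi> (conj K \<sigma> g) = \<chi> (conj K \<sigma> g')" using S(3) conjG[OF g] conjG[OF g'] by blast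
    then show "\<lfloor>- \<chi> (conj K \<sigma> g)\<rfloor> = \<lfloor>- \<chi> (conj K \<sigma> g')\<rfloor>" by simp
  qed
  show ?thesis unfolding cohomologous2_def L_def[symmetric] G_def[symmetric]
  proof (intro exI[of _ "\<lambda>g. \<lfloor>- \<chi> (conj K \<sigma> g)\<rfloor>"] conjI ballI)
    show "cont1 K G (\<lambda>g. \<lfloor>- \<chi> (conj K \<sigma> g)\<rfloor>)" by (rule bcont)
    fix g1 g2 assume g1: "g1 \<in> G" and g2: "g2 \<in> G"
    have e: "\<chi> (conj K \<sigma> (gmul K g1 g2)) = frac (\<chi> (conj K \<sigma> g1) + \<chi> (conj K \<sigma> g2))"
      using conj_mul[OF g1 g2] ch(1) conjG[OF g1] conjG[OF g2] by simp
    show "s_uu_star K \<sigma> (delta K \<chi>) g1 g2 - delta K (char_neg (char_act K \<sigma> \<chi>)) g1 g2 =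
         \<lfloor>- \<chi> (conj K \<sigma> g2)\<rfloor> - \<lfloor>- \<chi> (conj K \<sigma> (gmul K g1 g2))\<rfloor> + \<lfloor>- \<chi> (conj K \<sigma> g1)\<rfloor>"
      unfolding s_uu_star_def delta_def char_neg_def char_act_def e conj_mul[OF g1 g2, symmetric]
      using rat_id[of "\<chi> (conj K \<sigma> g2)" "\<chi> (conj K \<sigma> g1)"] by (simp add: add.commute)
  qed
qed

end
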